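(* There are absolute constants $\bar c>0$ such that if $c_1,c_2\le\bar c$ (e.g. $c_1=c_2=\frac1{200}$), the concentration conditions (CC) hold at $\mathbf{x}_t$ with constants $c_1,c_2$, $c_3\in[0,1)$, and $\mathbf{\Delta}_t$ satisfies the Case 2 requirement (namely, whenever $\|\mathbf{\Delta}_t^\star\|\ge\frac12\sqrt{\epsilon/\rho}$, $\tilde m_t(\mathbf{\Delta}_t)\le\tilde m_t(\mathbf{\Delta}_t^\star)+\frac{c_3}{12}\rho\|\mathbf{\Delta}_t^\star\|^3$), and $\mathbf{x}_t+\mathbf{\Delta}_t^\star$ is not an $\epsilon$-second-order stationary point of $f$, then $m_t(\mathbf{x}_t+\mathbf{\Delta}_t)-m_t(\mathbf{x}_t)\le-\frac{1-c_3}{96}\sqrt{\epsilon^3/\rho}$.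
   Context: $f:\mathbb{R}^d\to\mathbb{R}$ twice differentiable with $\rho$-Lipschitz Hessian (spectral norm); $\epsilon>0$. $\epsilon$-second-order stationary point: $\|\nabla f(\mathbf{x})\|\le\epsilon$ and $\lambda_{\min}(\nabla^2 f(\mathbf{x}))\ge-\sqrt{\rho\epsilon}$. (CC) at $\mathbf{x}_t$ with constants $c_1,c_2$: vector $\mathbf{g}_t$ and symmetric matrix $\mathbf{B}_t$ with $\|\mathbf{g}_t-\nabla f(\mathbf{x}_t)\|\le c_1\epsilon$ and $\|(\mathbf{B}_t-\nabla^2 f(\mathbf{x}_t))\mathbf{v}\|\le c_2\sqrt{\rho\epsilon}\|\mathbf{v}\|$ for all $\mathbf{v}$. Cubic model: $m_t(\mathbf{y})=f(\mathbf{x}_t)+(\mathbf{y}-\mathbf{x}_t)^\top\mathbf{g}_t+\frac12(\mathbf{y}-\mathbf{x}_t)^\top\mathbf{B}_t(\mathbf{y}-\mathbf{x}_t)+\frac\rho6\|\mathbf{y}-\mathbf{x}_t\|^3$, $\tilde m_t(\mathbf{\Delta})=m_t(\mathbf{x}_t+\mathbf{\Delta})-f(\mathbf{x}_t)$, and $\mathbf{\Delta}_t^\star$ a global minimizer of $\tilde m_t$. *)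

theory Defs
  imports "HOL-Analysis.Analysis"
begin

definition is_eigenvalue :: "real^'n^'n \<Rightarrow> real \<Rightarrow> bool" where
  "is_eigenvalue A l \<longleftrightarrow> (\<exists>v. v \<noteq> 0 \<and> A *v v = l *\<^sub>R v)"

text \<open>Smallest eigenvalue (used for symmetric matrices, where it exists).\<close>
definition lambda_min :: "real^'n^'n \<Rightarrow> real" where
  "lambda_min A = Inf {l. is_eigenvalue A l}"

definition is_eps_sosp ::
  "(real^'n \<Rightarrow> real^'n) \<Rightarrow> (real^'n \<Rightarrow> real^'n^'n) \<Rightarrow> real \<Rightarrow> real \<Rightarrow> real^'n \<Rightarrow> bool" where
  "is_eps_sosp grad H \<rho> \<epsilon> x \<longleftrightarrow> norm (grad x) \<le> \<epsilon> \<and> lambda_min (H x) \<ge> - sqrt (\<rho> * \<epsilon>)"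

definition cubic_model ::
  "(real^'n \<Rightarrow> real) \<Rightarrow> real^'n \<Rightarrow> real^'n \<Rightarrow> real^'n^'n \<Rightarrow> real \<Rightarrow> real^'n \<Rightarrow> real" where
  "cubic_model f x g B \<rho> y =
     f x + (y - x) \<bullet> g + 1/2 * ((y - x) \<bullet> (B *v (y - x))) + \<rho> / 6 * norm (y - x) ^ 3"

definition cubic_model_shift ::
  "(real^'n \<Rightarrow> real) \<Rightarrow> real^'n \<Rightarrow> real^'n \<Rightarrow> real^'n^'n \<Rightarrow> real \<Rightarrow> real^'n \<Rightarrow> real" where
  "cubic_model_shift f x g B \<rho> D = cubic_model f x g B \<rho> (x + D) - f x"

end

theory Submission
  imports Defs
begin

lemma lim_helper:
  fixes q a b :: real
  assumes "\<And>t. t > 0 \<Longrightarrow> 0 \<le> q + t*a + t^2*b"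
  shows "0 \<le> q"
proof (rule ccontr)
  assume "\<not> 0 \<le> q"
  hence q: "q < 0" by simp
  define t where "t = min 1 (-q/(2*(\<bar>a\<bar>+\<bar>b\<bar>+1)))"
  have d: "2*(\<bar>a\<bar>+\<bar>b\<bar>+1) > 0" by (simp add: add_pos_nonneg)
  have "-q/(2*(\<bar>a\<bar>+\<bar>b\<bar>+1)) > 0" using q d by (intro divide_pos_pos) auto
  hence tpos: "t > 0" by (simp add: t_def)
  have t1: "t \<le> 1" by (simp add: t_def)
  have t2: "t * (\<bar>a\<bar>+\<bar>b\<bar>+1) \<le> -q/2"
  proof -
    have "t \<le> -q/(2*(\<bar>a\<bar>+\<bar>b\<bar>+1))" by (simp add: t_def)
    hence "t * (\<bar>a\<bar>+\<bar>b\<bar>+1) \<le> -q/(2*(\<bar>a\<bar>+\<bar>b\<bar>+1)) * (\<bar>a\<bar>+\<bar>b\<bar>+1)"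
      by (intro mult_right_mono) auto
    also have "\<dots> = -q/2" by (simp add: field_simps)
    finally show ?thesis .
  qed
  have "t*a \<le> t*\<bar>a\<bar>" using tpos by (simp add: mult_left_mono)
  moreover have "t^2*b \<le> t*\<bar>b\<bar>"
  proof -
    have "t^2*b \<le> t^2*\<bar>b\<bar>" by (simp add: mult_left_mono)
    also have "\<dots> \<le> t*\<bar>b\<bar>" using tpos t1 by (simp add: power2_eq_square mult_right_mono mult_left_le_one_le)
    finally show ?thesis .
  qed
  moreover have "t*(\<bar>a\<bar>+\<bar>b\<bar>+1) = t*\<bar>a\<bar> + t*\<bar>b\<bar> + t" by (simp add: algebra_simps)
  ultimately have "q + t*a + t^2*b \<le> q + t*(\<bar>a\<bar>+\<bar>b\<bar>+1)" using tpos by linarith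
  also have "\<dots> < 0" using t2 q by linarith
  finally show False using assms[OF tpos] by linarith
qed

lemma sym_mat:
  fixes B :: "real^'n^'n"
  assumes "transpose B = B"
  shows "u \<bullet> (B *v w) = w \<bullet> (B *v u)"
proof -
  have "u \<bullet> (B *v w) = (u v* B) \<bullet> w" by (simp add: dot_lmul_matrix)
  also have "\<dots> = (transpose B *v u) \<bullet> w" by simp
  finally show ?thesis using assms by (simp add: inner_commute)
qed

lemma grad_taylor:
  fixes grad :: "real^'n \<Rightarrow> real^'n" and H :: "real^'n \<Rightarrow> real^'n^'n"
  assumes hess: "\<And>y. (grad has_derivative (\<lambda>h. H y *v h)) (at y)"
    and lip: "\<And>y z. onorm (\<lambda>v. (H y - H z) *v v) \<le> \<rho> * norm (y - z)"
    and rho: "\<rho> > 0"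
  shows "norm (grad z - grad y - H y *v (z - y)) \<le> \<rho> * norm (z - y)^2"
proof -
  have "norm (grad z - grad y - H y *v (z - y)) \<le> norm (z - y) * (\<rho> * norm (z - y))"
  proof (rule differentiable_bound_linearization[where S="cball y (norm (z-y))" and f'="\<lambda>x h. H x *v h"])
    fix t :: real assume "t \<in> {0..1}"
    thus "y + t *\<^sub>R (z - y) \<in> cball y (norm (z - y))"
      by (simp add: dist_norm mult_left_le_one_le)
  next
    fix x assume "x \<in> cball y (norm (z - y))"
    show "(grad has_derivative (\<lambda>h. H x *v h)) (at x within cball y (norm (z - y)))"
      using hess has_derivative_at_withinI by blast
  next
    fix x assume x: "x \<in> cball y (norm (z - y))"
    have "onorm ((\<lambda>h. H x *v h) - (\<lambda>h. H y *v h)) = onorm (\<lambda>v. (H x - H y) *v v)"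
      by (simp add: fun_diff_def matrix_vector_mult_diff_rdistrib)
    also have "\<dots> \<le> \<rho> * norm (x - y)" by (rule lip)
    also have "\<dots> \<le> \<rho> * norm (z - y)"
    proof -
      have "\<rho> \<ge> 0" using rho by simp
      moreover have "norm (x - y) \<le> norm (z - y)" using x by (simp add: dist_norm norm_minus_commute)
      ultimately show ?thesis by (simp add: mult_left_mono)
    qed
    finally show "onorm ((\<lambda>h. H x *v h) - (\<lambda>h. H y *v h)) \<le> \<rho> * norm (z - y)" .
  next
    show "y \<in> cball y (norm (z - y))" by simp
  qed
  thus ?thesis by (simp add: power2_eq_square mult_ac)
qed

lemma leg:
  fixes f :: "real^'n \<Rightarrow> real" and grad :: "real^'n \<Rightarrow> real^'n" and H :: "real^'n \<Rightarrow> real^'n^'n"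
  assumes grad: "\<And>y. (f has_derivative (\<lambda>h. grad y \<bullet> h)) (at y)"
    and hess: "\<And>y. (grad has_derivative (\<lambda>h. H y *v h)) (at y)"
    and lip: "\<And>y z. onorm (\<lambda>v. (H y - H z) *v v) \<le> \<rho> * norm (y - z)"
    and rho: "\<rho> > 0"
  shows "\<bar>f (z0 + d) - f z0 - (grad y + H y *v (z0 - y)) \<bullet> d - 1/2 * (d \<bullet> (H y *v d))\<bar>
          \<le> \<rho> * (norm (z0 - y) + norm d)^2 * norm d"
proof -
  define c where "c = (grad y + H y *v (z0 - y)) \<bullet> d"
  define e where "e = d \<bullet> (H y *v d)"
  define \<phi> where "\<phi> \<tau> = f (z0 + \<tau> *\<^sub>R d) - \<tau> * c - \<tau>^2/2 * e" for \<tau>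
  define \<phi>' where "\<phi>' \<tau> = grad (z0 + \<tau> *\<^sub>R d) \<bullet> d - c - \<tau> * e" for \<tau>
  have D: "DERIV \<phi> \<tau> :> \<phi>' \<tau>" for \<tau>
  proof -
    have "((\<lambda>\<tau>. f (z0 + \<tau> *\<^sub>R d)) has_derivative (\<lambda>s. grad (z0 + \<tau> *\<^sub>R d) \<bullet> (s *\<^sub>R d))) (at \<tau>)"
      by (rule has_derivative_compose[OF _ grad]) (auto intro!: derivative_eq_intros)
    hence "DERIV (\<lambda>\<tau>. f (z0 + \<tau> *\<^sub>R d)) \<tau> :> grad (z0 + \<tau> *\<^sub>R d) \<bullet> d"
      by (rule has_derivative_imp_has_field_derivative) (simp add: mult.commute)
    thus ?thesis unfolding \<phi>_def \<phi>'_def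
      by (auto intro!: derivative_eq_intros)
  qed
  obtain z where z: "0 < z" "z < 1" "\<phi> 1 - \<phi> 0 = (1 - 0) * \<phi>' z"
    using MVT2[of 0 1 \<phi> \<phi>'] D by auto
  have eq1: "\<phi> 1 - \<phi> 0 = f (z0 + d) - f z0 - (grad y + H y *v (z0 - y)) \<bullet> d - 1/2 * (d \<bullet> (H y *v d))"
    by (simp add: \<phi>_def c_def e_def)
  have eq2: "\<phi>' z = d \<bullet> (grad (z0 + z *\<^sub>R d) - grad y - H y *v (z0 + z *\<^sub>R d - y))"
    unfolding \<phi>'_def c_def e_def
    by (simp add: inner_diff_right inner_add_left inner_commute matrix_vector_right_distrib
          matrix_vector_mult_diff_distrib algebra_simps)
  have "\<bar>\<phi>' z\<bar> \<le> norm d * norm (grad (z0 + z *\<^sub>R d) - grad y - H y *v (z0 + z *\<^sub>R d - y))"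
    unfolding eq2 by (rule Cauchy_Schwarz_ineq2)
  also have "\<dots> \<le> norm d * (\<rho> * norm (z0 + z *\<^sub>R d - y)^2)"
    by (intro mult_left_mono grad_taylor[OF hess lip rho]) auto
  also have "\<dots> \<le> norm d * (\<rho> * (norm (z0 - y) + norm d)^2)"
  proof -
    have "norm (z0 + z *\<^sub>R d - y) \<le> norm (z0 - y) + norm (z *\<^sub>R d)"
      by (metis add_diff_eq diff_add_eq norm_triangle_ineq add.commute)
    also have "norm (z *\<^sub>R d) \<le> norm d" using z by (simp add: mult_left_le_one_le)
    finally have "norm (z0 + z *\<^sub>R d - y) \<le> norm (z0 - y) + norm d" by simp
    hence "norm (z0 + z *\<^sub>R d - y)^2 \<le> (norm (z0 - y) + norm d)^2"
      by (intro power_mono) auto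
    thus ?thesis using rho by (intro mult_left_mono) auto
  qed
  finally show ?thesis using z eq1 by (simp add: mult_ac)
qed

lemma hess_sym:
  fixes f :: "real^'n \<Rightarrow> real" and grad :: "real^'n \<Rightarrow> real^'n" and H :: "real^'n \<Rightarrow> real^'n^'n"
  assumes grad: "\<And>y. (f has_derivative (\<lambda>h. grad y \<bullet> h)) (at y)"
    and hess: "\<And>y. (grad has_derivative (\<lambda>h. H y *v h)) (at y)"
    and lip: "\<And>y z. onorm (\<lambda>v. (H y - H z) *v v) \<le> \<rho> * norm (y - z)"
    and rho: "\<rho> > 0"
  shows "h \<bullet> (H y *v k) = k \<bullet> (H y *v h)"
proof -
  define a where "a = h \<bullet> (H y *v k) - k \<bullet> (H y *v h)"
  define K where "K = 4 * \<rho> * (norm h + norm k)^3"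
  have bnd: "0 \<le> - \<bar>a\<bar> + s * K + s^2 * 0" if s: "s > 0" for s
  proof -
    note L = leg[OF grad hess lip rho]
    have L1: "\<bar>f (y + s *\<^sub>R h) - f y - (grad y) \<bullet> (s *\<^sub>R h) - 1/2 * ((s *\<^sub>R h) \<bullet> (H y *v (s *\<^sub>R h)))\<bar>
          \<le> \<rho> * (s * (norm h + norm k))^3"
    proof -
      have "\<rho> * (norm (y - y) + norm (s *\<^sub>R h))^2 * norm (s *\<^sub>R h) \<le> \<rho> * (s * (norm h + norm k))^3"
        using s rho by (auto simp: power3_eq_cube power2_eq_square intro!: mult_mono mult_left_mono)
      thus ?thesis using L[of y "s *\<^sub>R h" y] by simp
    qed
    have L3: "\<bar>f (y + s *\<^sub>R k) - f y - (grad y) \<bullet> (s *\<^sub>R k) - 1/2 * ((s *\<^sub>R k) \<bullet> (H y *v (s *\<^sub>R k)))\<bar>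
          \<le> \<rho> * (s * (norm h + norm k))^3"
    proof -
      have "\<rho> * (norm (y - y) + norm (s *\<^sub>R k))^2 * norm (s *\<^sub>R k) \<le> \<rho> * (s * (norm h + norm k))^3"
        using s rho by (auto simp: power3_eq_cube power2_eq_square intro!: mult_mono mult_left_mono)
      thus ?thesis using L[of y "s *\<^sub>R k" y] by simp
    qed
    have L2: "\<bar>f (y + s *\<^sub>R h + s *\<^sub>R k) - f (y + s *\<^sub>R h) - (grad y + H y *v (s *\<^sub>R h)) \<bullet> (s *\<^sub>R k) - 1/2 * ((s *\<^sub>R k) \<bullet> (H y *v (s *\<^sub>R k)))\<bar>
          \<le> \<rho> * (s * (norm h + norm k))^3"
    proof -
      have "\<rho> * (norm (s *\<^sub>R h) + norm (s *\<^sub>R k))^2 * norm (s *\<^sub>R k) \<le> \<rho> * (s * (norm h + norm k))^3"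
        using s rho by (auto simp: power3_eq_cube power2_eq_square algebra_simps intro!: mult_mono mult_left_mono)
      thus ?thesis using L[of "y + s *\<^sub>R h" "s *\<^sub>R k" y] by simp
    qed
    have L4: "\<bar>f (y + s *\<^sub>R k + s *\<^sub>R h) - f (y + s *\<^sub>R k) - (grad y + H y *v (s *\<^sub>R k)) \<bullet> (s *\<^sub>R h) - 1/2 * ((s *\<^sub>R h) \<bullet> (H y *v (s *\<^sub>R h)))\<bar>
          \<le> \<rho> * (s * (norm h + norm k))^3"
    proof -
      have "\<rho> * (norm (s *\<^sub>R k) + norm (s *\<^sub>R h))^2 * norm (s *\<^sub>R h) \<le> \<rho> * (s * (norm h + norm k))^3"
        using s rho by (auto simp: power3_eq_cube power2_eq_square algebra_simps intro!: mult_mono mult_left_mono)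
      thus ?thesis using L[of "y + s *\<^sub>R k" "s *\<^sub>R h" y] by simp
    qed
    have comm: "y + s *\<^sub>R k + s *\<^sub>R h = y + s *\<^sub>R h + s *\<^sub>R k" by (simp add: algebra_simps)
    have iden: "(grad y + H y *v (s *\<^sub>R h)) \<bullet> (s *\<^sub>R k) - (grad y + H y *v (s *\<^sub>R k)) \<bullet> (s *\<^sub>R h)
        + grad y \<bullet> (s *\<^sub>R h) - grad y \<bullet> (s *\<^sub>R k) = s^2 * (- a)"
      unfolding a_def
      by (simp add: inner_add_left matrix_vector_mult_scaleR inner_commute power2_eq_square algebra_simps)
    have "s^2 * \<bar>a\<bar> \<le> 4 * (\<rho> * (s * (norm h + norm k))^3)"
      using L1 L2 L3 L4 iden unfolding comm by (simp add: abs_mult)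
    hence "s^2 * \<bar>a\<bar> \<le> s^2 * (s * K)" by (simp add: K_def power3_eq_cube power2_eq_square algebra_simps)
    hence "\<bar>a\<bar> \<le> s * K" using s by (simp add: mult_le_cancel_left)
    thus ?thesis by simp
  qed
  have "0 \<le> - \<bar>a\<bar>" by (rule lim_helper[OF bnd])
  thus ?thesis by (simp add: a_def)
qed

lemma eig_exists:
  fixes A :: "real^'n^'n"
  assumes sym: "\<And>u w. u \<bullet> (A *v w) = w \<bullet> (A *v u)"
  shows "\<exists>l. is_eigenvalue A l"
proof -
  define Q where "Q v = v \<bullet> (A *v v)" for v
  have cont: "continuous_on (sphere (0::real^'n) 1) Q"
    unfolding Q_def
    by (intro continuous_intros linear_continuous_on matrix_vector_mul_bounded_linear)
  have ne: "sphere (0::real^'n) 1 \<noteq> {}" by simp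
  obtain v0 where v0: "v0 \<in> sphere 0 1" "\<And>y. y \<in> sphere 0 1 \<Longrightarrow> Q v0 \<le> Q y"
    using continuous_attains_inf[OF compact_sphere ne cont] by blast
  define m where "m = Q v0"
  have nv0: "norm v0 = 1" using v0 by simp
  have Qs: "Q (c *\<^sub>R w) = c^2 * Q w" for c w
    by (simp add: Q_def matrix_vector_mult_scaleR power2_eq_square)
  have P: "m * norm w ^ 2 \<le> Q w" for w
  proof (cases "w = 0")
    case True thus ?thesis by (simp add: Q_def)
  next
    case False
    hence "(1 / norm w) *\<^sub>R w \<in> sphere 0 1" by simp
    hence "m \<le> Q ((1 / norm w) *\<^sub>R w)" using v0 m_def by blast
    hence "m \<le> Q w / norm w ^ 2" by (simp add: Qs power_divide)
    thus ?thesis using False by (simp add: field_simps)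
  qed
  have exp: "Q (v0 + t *\<^sub>R w) - m * norm (v0 + t *\<^sub>R w)^2
      = 2 * t * (w \<bullet> (A *v v0 - m *\<^sub>R v0)) + t^2 * (Q w - m * norm w ^ 2)" for t w
  proof -
    have "norm (v0 + t *\<^sub>R w)^2 = 1 + 2 * t * (w \<bullet> v0) + t^2 * norm w ^2"
    proof -
      have "v0 \<bullet> v0 = 1" using nv0 by (simp add: dot_square_norm)
      thus ?thesis unfolding power2_norm_eq_inner
        by (simp add: inner_add_left inner_add_right inner_commute power2_eq_square algebra_simps)
    qed
    moreover have "Q (v0 + t *\<^sub>R w) = m + 2 * t * (w \<bullet> (A *v v0)) + t^2 * Q w"
      unfolding Q_def m_def using sym[of v0 w]
      by (simp add: matrix_vector_right_distrib matrix_vector_mult_scaleR inner_add_left inner_add_right power2_eq_square algebra_simps)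
    ultimately show ?thesis using nv0 by (simp add: inner_diff_right algebra_simps)
  qed
  have half: "0 \<le> w \<bullet> (A *v v0 - m *\<^sub>R v0)" for w
  proof -
    have "0 \<le> 2 * (w \<bullet> (A *v v0 - m *\<^sub>R v0)) + t * (Q w - m * norm w ^ 2) + t^2 * 0" if "t > 0" for t
    proof -
      have "0 \<le> Q (v0 + t *\<^sub>R w) - m * norm (v0 + t *\<^sub>R w)^2" using P by simp
      hence "0 \<le> t * (2 * (w \<bullet> (A *v v0 - m *\<^sub>R v0)) + t * (Q w - m * norm w ^ 2))"
        unfolding exp by (simp add: power2_eq_square algebra_simps)
      thus ?thesis using that by (simp add: zero_le_mult_iff)
    qed
    hence "0 \<le> 2 * (w \<bullet> (A *v v0 - m *\<^sub>R v0))" by (rule lim_helper)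
    thus ?thesis by simp
  qed
  have "0 \<le> (- (A *v v0 - m *\<^sub>R v0)) \<bullet> (A *v v0 - m *\<^sub>R v0)" by (rule half)
  hence "(A *v v0 - m *\<^sub>R v0) \<bullet> (A *v v0 - m *\<^sub>R v0) \<le> 0" by (simp only: inner_minus_left)
  hence "A *v v0 - m *\<^sub>R v0 = 0" by (metis inner_eq_zero_iff inner_ge_zero order.antisym)
  hence "A *v v0 = m *\<^sub>R v0" by simp
  moreover have "v0 \<noteq> 0" using nv0 by auto
  ultimately show ?thesis unfolding is_eigenvalue_def by blast
qed

lemma lambda_min_ge:
  fixes A :: "real^'n^'n"
  assumes sym: "\<And>u w. u \<bullet> (A *v w) = w \<bullet> (A *v u)"
    and lb: "\<And>v. c * norm v ^ 2 \<le> v \<bullet> (A *v v)"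
  shows "c \<le> lambda_min A"
  unfolding lambda_min_def
proof (rule cInf_greatest)
  show "{l. is_eigenvalue A l} \<noteq> {}" using eig_exists[OF sym] by blast
next
  fix l assume "l \<in> {l. is_eigenvalue A l}"
  then obtain v where v: "v \<noteq> 0" "A *v v = l *\<^sub>R v" by (auto simp: is_eigenvalue_def)
  have "c * norm v ^ 2 \<le> l * norm v ^ 2"
    using lb[of v] v by (simp add: power2_norm_eq_inner)
  thus "c \<le> l" using v by simp
qed

lemma foc_nz:
  fixes B :: "real^'n^'n" and g D :: "real^'n"
  assumes sym: "\<And>u w. u \<bullet> (B *v w) = w \<bullet> (B *v u)"
    and nz: "D \<noteq> 0"
    and min: "\<And>D'. D \<bullet> g + 1/2 * (D \<bullet> (B *v D)) + \<rho>/6 * norm D ^ 3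
                   \<le> D' \<bullet> g + 1/2 * (D' \<bullet> (B *v D')) + \<rho>/6 * norm D' ^ 3"
  shows "g + B *v D + (\<rho>/2 * norm D) *\<^sub>R D = 0"
proof -
  define \<phi> where "\<phi> E = E \<bullet> g + 1/2 * (E \<bullet> (B *v E)) + \<rho>/6 * norm E ^ 3" for E :: "real^'n"
  have dn: "((\<lambda>E. norm E ^ 3) has_derivative (\<lambda>h. 3 * (h \<bullet> sgn D) * norm D ^ 2)) (at D)"
    using has_derivative_power[OF has_derivative_norm[OF nz], of 3] by simp
  have dq: "((\<lambda>E. E \<bullet> (B *v E)) has_derivative (\<lambda>h. D \<bullet> (B *v h) + h \<bullet> (B *v D))) (at D)"
    by (intro has_derivative_inner has_derivative_ident
        bounded_linear.has_derivative[OF matrix_vector_mul_bounded_linear])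
  have dl: "((\<lambda>E. E \<bullet> g) has_derivative (\<lambda>h. h \<bullet> g)) (at D)"
    by (intro bounded_linear.has_derivative[OF bounded_linear_inner_left] has_derivative_ident)
  have d: "(\<phi> has_derivative (\<lambda>h. h \<bullet> g + 1/2 * (D \<bullet> (B *v h) + h \<bullet> (B *v D)) + \<rho>/6 * (3 * (h \<bullet> sgn D) * norm D ^ 2))) (at D)"
    unfolding \<phi>_def
    by (intro has_derivative_add has_derivative_mult_right dq dn dl)
  have "(\<lambda>h. h \<bullet> g + 1/2 * (D \<bullet> (B *v h) + h \<bullet> (B *v D)) + \<rho>/6 * (3 * (h \<bullet> sgn D) * norm D ^ 2)) = (\<lambda>v. 0)"
  proof -
    have mm: "(\<forall>y\<in>UNIV. \<phi> y \<le> \<phi> D) \<or> (\<forall>y\<in>UNIV. \<phi> D \<le> \<phi> y)"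
      using min by (simp add: \<phi>_def)
    show ?thesis by (rule differential_zero_maxmin[OF UNIV_I open_UNIV d mm])
  qed
  hence z: "w \<bullet> g + 1/2 * (D \<bullet> (B *v w) + w \<bullet> (B *v D)) + \<rho>/6 * (3 * (w \<bullet> sgn D) * norm D ^ 2) = 0" for w
    by (simp add: fun_eq_iff)
  have "w \<bullet> (g + B *v D + (\<rho>/2 * norm D) *\<^sub>R D) = 0" for w
  proof -
    have "w \<bullet> sgn D * norm D ^ 2 = norm D * (w \<bullet> D)"
      using nz by (simp add: sgn_div_norm power2_eq_square)
    thus ?thesis using z[of w] sym[of D w]
      by (simp add: inner_add_right algebra_simps)
  qed
  from this[of "g + B *v D + (\<rho>/2 * norm D) *\<^sub>R D"] show ?thesis by simp
qed

lemma soc: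
  fixes B :: "real^'n^'n" and g D v :: "real^'n"
  assumes sym: "\<And>u w. u \<bullet> (B *v w) = w \<bullet> (B *v u)"
    and min: "\<And>D'. D \<bullet> g + 1/2 * (D \<bullet> (B *v D)) + \<rho>/6 * norm D ^ 3
                   \<le> D' \<bullet> g + 1/2 * (D' \<bullet> (B *v D')) + \<rho>/6 * norm D' ^ 3"
    and foc: "g + B *v D + (\<rho>/2 * norm D) *\<^sub>R D = 0"
  shows "0 \<le> v \<bullet> (B *v v) + \<rho>/2 * norm D * norm v ^ 2"
proof -
  define \<phi> where "\<phi> E = E \<bullet> g + 1/2 * (E \<bullet> (B *v E)) + \<rho>/6 * norm E ^ 3" for E :: "real^'n"
  define c where "c = \<rho>/2 * norm D"
  define q where "q u = u \<bullet> (B *v u) + c * norm u ^ 2" for u :: "real^'n"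
  have gD: "g = - (B *v D) - c *\<^sub>R D" using foc unfolding c_def by (simp add: algebra_simps eq_neg_iff_add_eq_0)
  have qs: "q (s *\<^sub>R u) = s^2 * q u" for s u
    by (simp add: q_def matrix_vector_mult_scaleR power2_eq_square algebra_simps)
  have refl: "0 \<le> q w" if w: "norm (D + w) = norm D" for w
  proof -
    have "w \<bullet> D = - (norm w ^ 2) / 2"
    proof -
      have "(D + w) \<bullet> (D + w) = D \<bullet> D" using w by (metis dot_square_norm)
      thus ?thesis by (simp add: inner_add_left inner_add_right inner_commute power2_norm_eq_inner)
    qed
    moreover have "\<phi> (D + w) - \<phi> D = w \<bullet> g + 1/2 * (2 * (w \<bullet> (B *v D)) + w \<bullet> (B *v w))"
      using w sym[of D w] unfolding \<phi>_def
      by (simp add: inner_add_left inner_add_right matrix_vector_right_distrib algebra_simps)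
    ultimately have "\<phi> (D + w) - \<phi> D = 1/2 * q w"
      unfolding gD q_def by (simp add: inner_diff_right inner_minus_right inner_commute algebra_simps)
    moreover have "\<phi> D \<le> \<phi> (D + w)" unfolding \<phi>_def by (rule min)
    ultimately show ?thesis by simp
  qed
  have nz: "0 \<le> q u" if a: "u \<bullet> D \<noteq> 0" for u
  proof -
    have u0: "u \<noteq> 0" using a by auto
    define n2 where "n2 = u \<bullet> u"
    have n2: "n2 > 0" using u0 by (simp add: n2_def)
    define s where "s = - 2 * (u \<bullet> D) / n2"
    have e: "2 * s * (u \<bullet> D) + s^2 * n2 = 0"
      using n2 by (simp add: s_def field_simps power2_eq_square)
    have "(D + s *\<^sub>R u) \<bullet> (D + s *\<^sub>R u) = D \<bullet> D + (2 * s * (u \<bullet> D) + s^2 * n2)"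
      by (simp add: inner_add_left inner_add_right inner_commute n2_def power2_eq_square algebra_simps)
    hence "(D + s *\<^sub>R u) \<bullet> (D + s *\<^sub>R u) = D \<bullet> D" using e by simp
    hence "norm (D + s *\<^sub>R u) = norm D" by (simp add: norm_eq_sqrt_inner)
    hence "0 \<le> q (s *\<^sub>R u)" by (rule refl)
    hence "0 \<le> s^2 * q u" by (simp add: qs)
    moreover have "s \<noteq> 0" using a n2 by (simp add: s_def)
    ultimately show ?thesis by (simp add: zero_le_mult_iff)
  qed
  have "0 \<le> q v"
  proof (cases "D = 0")
    case True
    hence g0: "g = 0" using foc by simp
    have "0 \<le> v \<bullet> (B *v v) + t * (\<rho>/3 * norm v ^ 3) + t^2 * 0" if t: "t > 0" for t
    proof -
      have "\<phi> D \<le> \<phi> (t *\<^sub>R v)" unfolding \<phi>_def by (rule min)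
      hence "\<phi> 0 \<le> \<phi> (t *\<^sub>R v)" using True by simp
      hence "0 \<le> t^2 * (1/2 * (v \<bullet> (B *v v)) + t * (\<rho>/6 * norm v ^ 3))"
        unfolding \<phi>_def using g0 t
        by (simp add: matrix_vector_mult_scaleR power2_eq_square power3_eq_cube algebra_simps)
      hence "0 \<le> 1/2 * (v \<bullet> (B *v v)) + t * (\<rho>/6 * norm v ^ 3)" using t by (simp add: zero_le_mult_iff)
      thus ?thesis by simp
    qed
    hence "0 \<le> v \<bullet> (B *v v)" by (rule lim_helper)
    thus ?thesis using True by (simp add: q_def c_def)
  next
    case False
    show ?thesis
    proof (cases "v \<bullet> D = 0")
      case False thus ?thesis by (rule nz)
    next
      case vD: True
      have "0 \<le> q v + t * (2 * (v \<bullet> (B *v D))) + t^2 * q D" if t: "t > 0" for t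
      proof -
        have "(v + t *\<^sub>R D) \<bullet> D \<noteq> 0" using vD t False by (simp add: inner_add_left)
        hence "0 \<le> q (v + t *\<^sub>R D)" by (rule nz)
        moreover have "q (v + t *\<^sub>R D) = q v + t * (2 * (v \<bullet> (B *v D))) + t^2 * q D"
          unfolding q_def power2_norm_eq_inner using vD sym[of v D]
          by (simp add: inner_add_left inner_add_right matrix_vector_right_distrib matrix_vector_mult_scaleR
              inner_commute power2_eq_square algebra_simps)
        ultimately show ?thesis by simp
      qed
      thus ?thesis by (rule lim_helper)
    qed
  qed
  thus ?thesis by (simp add: q_def c_def)
qed

lemma mvm_neg: "(A::real^'n^'m) *v (- x) = - (A *v x)"
  using matrix_vector_mult_scaleR[of A "-1" x] by simp

lemma foc:
  fixes B :: "real^'n^'n" and g D :: "real^'n"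
  assumes sym: "\<And>u w. u \<bullet> (B *v w) = w \<bullet> (B *v u)"
    and min: "\<And>D'. D \<bullet> g + 1/2 * (D \<bullet> (B *v D)) + \<rho>/6 * norm D ^ 3
                   \<le> D' \<bullet> g + 1/2 * (D' \<bullet> (B *v D')) + \<rho>/6 * norm D' ^ 3"
  shows "g + B *v D + (\<rho>/2 * norm D) *\<^sub>R D = 0"
proof (cases "D = 0")
  case False thus ?thesis using foc_nz[OF sym False min] by blast
next
  case True
  have "0 \<le> - (g \<bullet> g) + t * (1/2 * (g \<bullet> (B *v g))) + t^2 * (\<rho>/6 * norm g ^ 3)" if t: "t > 0" for t
  proof -
    have "D \<bullet> g + 1/2 * (D \<bullet> (B *v D)) + \<rho>/6 * norm D ^ 3
       \<le> ((-t) *\<^sub>R g) \<bullet> g + 1/2 * (((-t) *\<^sub>R g) \<bullet> (B *v ((-t) *\<^sub>R g))) + \<rho>/6 * norm ((-t) *\<^sub>R g) ^ 3"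
      by (rule min)
    hence "0 \<le> t * (- (g \<bullet> g) + t * (1/2 * (g \<bullet> (B *v g))) + t^2 * (\<rho>/6 * norm g ^ 3))"
      using True t by (simp add: mvm_neg matrix_vector_mult_scaleR power2_eq_square power3_eq_cube algebra_simps)
    thus ?thesis using t by (simp add: zero_le_mult_iff)
  qed
  hence "0 \<le> - (g \<bullet> g)" by (rule lim_helper)
  hence "g = 0" by (metis inner_eq_zero_iff inner_ge_zero neg_0_le_iff_le order.antisym)
  thus ?thesis using True by simp
qed

theorem claim1:
  fixes f :: "real^'n \<Rightarrow> real"
    and grad :: "real^'n \<Rightarrow> real^'n"
    and H :: "real^'n \<Rightarrow> real^'n^'n"
    and \<rho> \<epsilon> c1 c2 c3 :: real
    and x g D Dstar :: "real^'n"
    and B :: "real^'n^'n"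
  assumes grad: "\<And>y. (f has_derivative (\<lambda>h. grad y \<bullet> h)) (at y)"
    and hess: "\<And>y. (grad has_derivative (\<lambda>h. H y *v h)) (at y)"
    and rho_pos: "\<rho> > 0"
    and lip: "\<And>y z. onorm (\<lambda>v. (H y - H z) *v v) \<le> \<rho> * norm (y - z)"
    and eps_pos: "\<epsilon> > 0"
    and c1: "c1 \<le> 1/200" and c2: "c2 \<le> 1/200"
    and B_sym: "transpose B = B"
    and cc1: "norm (g - grad x) \<le> c1 * \<epsilon>"
    and cc2: "\<And>v. norm ((B - H x) *v v) \<le> c2 * sqrt (\<rho> * \<epsilon>) * norm v"
    and c3: "0 \<le> c3" "c3 < 1"
    and Dstar_min: "\<And>D'. cubic_model_shift f x g B \<rho> Dstar \<le> cubic_model_shift f x g B \<rho> D'"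
    and case2: "norm Dstar \<ge> 1/2 * sqrt (\<epsilon> / \<rho>) \<longrightarrow>
       cubic_model_shift f x g B \<rho> D \<le> cubic_model_shift f x g B \<rho> Dstar + c3 / 12 * \<rho> * norm Dstar ^ 3"
    and not_sosp: "\<not> is_eps_sosp grad H \<rho> \<epsilon> (x + Dstar)"
  shows "cubic_model f x g B \<rho> (x + D) - cubic_model f x g B \<rho> x \<le> - (1 - c3) / 96 * sqrt (\<epsilon> ^ 3 / \<rho>)"
proof -
  define mt where "mt = cubic_model_shift f x g B \<rho>"
  have mt_eq: "mt E = E \<bullet> g + 1/2 * (E \<bullet> (B *v E)) + \<rho>/6 * norm E ^ 3" for E
    by (simp add: mt_def cubic_model_shift_def cubic_model_def)
  have symB: "\<And>u w. u \<bullet> (B *v w) = w \<bullet> (B *v u)" by (rule sym_mat[OF B_sym])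
  have min: "Dstar \<bullet> g + 1/2 * (Dstar \<bullet> (B *v Dstar)) + \<rho>/6 * norm Dstar ^ 3
                   \<le> D' \<bullet> g + 1/2 * (D' \<bullet> (B *v D')) + \<rho>/6 * norm D' ^ 3" for D'
    using Dstar_min[of D'] unfolding mt_def[symmetric] mt_eq .
  define r where "r = norm Dstar"
  have r0: "r \<ge> 0" by (simp add: r_def)
  have focD: "g + B *v Dstar + (\<rho>/2 * r) *\<^sub>R Dstar = 0" unfolding r_def by (rule foc[OF symB min])
  have socD: "0 \<le> v \<bullet> (B *v v) + \<rho>/2 * r * norm v ^ 2" for v
    unfolding r_def by (rule soc[OF symB min focD[unfolded r_def]])
  define sq where "sq = sqrt (\<epsilon> / \<rho>)"
  have "\<epsilon> / \<rho> \<ge> 0" using eps_pos rho_pos by simp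
  hence sq0: "sq \<ge> 0" by (simp add: sq_def)
  hence sq2: "sq^2 = \<epsilon> / \<rho>" by (simp add: sq_def)
  have srho: "sqrt (\<rho> * \<epsilon>) = \<rho> * sq"
  proof -
    have e: "\<rho> * \<epsilon> = \<rho>^2 * (\<epsilon> / \<rho>)" using rho_pos by (simp add: power2_eq_square)
    have "sqrt (\<rho> * \<epsilon>) = sqrt (\<rho>^2 * (\<epsilon> / \<rho>))" by (simp only: e)
    also have "\<dots> = sqrt (\<rho>^2) * sqrt (\<epsilon> / \<rho>)" by (rule real_sqrt_mult)
    also have "\<dots> = \<rho> * sq" using rho_pos by (simp add: sq_def)
    finally show ?thesis .
  qed
  have seps: "sqrt (\<epsilon> ^ 3 / \<rho>) = \<epsilon> * sq"
  proof -
    have e: "\<epsilon> ^ 3 / \<rho> = \<epsilon>^2 * (\<epsilon> / \<rho>)" by (simp add: power2_eq_square power3_eq_cube)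
    have "sqrt (\<epsilon> ^ 3 / \<rho>) = sqrt (\<epsilon>^2 * (\<epsilon> / \<rho>))" by (simp only: e)
    also have "\<dots> = sqrt (\<epsilon>^2) * sqrt (\<epsilon> / \<rho>)" by (rule real_sqrt_mult)
    also have "\<dots> = \<epsilon> * sq" using eps_pos by (simp add: sq_def)
    finally show ?thesis .
  qed
  have eps_sq: "\<epsilon> = \<rho> * sq^2" using sq2 rho_pos by simp
  have val: "mt Dstar \<le> - \<rho>/12 * r^3"
  proof -
    have "Dstar \<bullet> g = - (Dstar \<bullet> (B *v Dstar)) - \<rho>/2 * r * r^2"
    proof -
      have "Dstar \<bullet> (g + B *v Dstar + (\<rho>/2 * r) *\<^sub>R Dstar) = 0" using focD by simp
      moreover have "Dstar \<bullet> Dstar = r^2" by (simp add: r_def power2_norm_eq_inner)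
      ultimately show ?thesis by (simp add: inner_add_right algebra_simps)
    qed
    moreover have "0 \<le> Dstar \<bullet> (B *v Dstar) + \<rho>/2 * r * r^2" using socD[of Dstar] by (simp add: r_def)
    ultimately show ?thesis unfolding mt_eq r_def[symmetric] by (simp add: power2_eq_square power3_eq_cube algebra_simps)
  qed
  have big: "r \<ge> 1/2 * sq"
  proof (rule ccontr)
    assume "\<not> r \<ge> 1/2 * sq"
    hence rs: "r < 1/2 * sq" by simp
    have r2: "r^2 \<le> 1/4 * sq^2"
    proof -
      have "r^2 \<le> (1/2 * sq)^2" using rs r0 by (intro power_mono) auto
      thus ?thesis by (simp add: power2_eq_square)
    qed
    define y where "y = x + Dstar"
    have gbound: "norm (grad y) \<le> \<epsilon>"
    proof -
      define E where "E = grad y - grad x - H x *v Dstar"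
      have E: "norm E \<le> \<rho> * r^2"
        using grad_taylor[OF hess lip rho_pos, of y x] by (simp add: E_def y_def r_def)
      have dec: "grad y = (grad x - g) - (B - H x) *v Dstar - (\<rho>/2 * r) *\<^sub>R Dstar + E"
        using focD unfolding E_def
        by (simp add: matrix_vector_mult_diff_rdistrib algebra_simps eq_neg_iff_add_eq_0)
      have "norm (grad y) \<le> norm (grad x - g) + norm ((B - H x) *v Dstar) + norm ((\<rho>/2 * r) *\<^sub>R Dstar) + norm E"
        unfolding dec
        using norm_triangle_ineq[of "grad x - g - (B - H x) *v Dstar - (\<rho>/2 * r) *\<^sub>R Dstar" E]
          norm_triangle_ineq4[of "grad x - g - (B - H x) *v Dstar" "(\<rho>/2 * r) *\<^sub>R Dstar"]
          norm_triangle_ineq4[of "grad x - g" "(B - H x) *v Dstar"] by linarith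
      also have "\<dots> \<le> c1 * \<epsilon> + c2 * (\<rho> * sq) * r + \<rho>/2 * r^2 + \<rho> * r^2"
      proof -
        have "norm (grad x - g) \<le> c1 * \<epsilon>" using cc1 by (simp add: norm_minus_commute)
        moreover have "norm ((B - H x) *v Dstar) \<le> c2 * (\<rho> * sq) * r"
          using cc2[of Dstar] srho by (simp add: r_def)
        moreover have "norm ((\<rho>/2 * r) *\<^sub>R Dstar) = \<rho>/2 * r^2"
          using rho_pos r0 by (simp add: r_def power2_eq_square)
        ultimately show ?thesis using E by linarith
      qed
      also have "\<dots> \<le> 1/200 * \<epsilon> + 1/200 * (\<rho> * sq) * r + \<rho>/2 * r^2 + \<rho> * r^2"
      proof -
        have "c1 * \<epsilon> \<le> 1/200 * \<epsilon>" using c1 eps_pos by (simp add: mult_right_mono)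
        moreover have "c2 * (\<rho> * sq * r) \<le> 1/200 * (\<rho> * sq * r)"
          using c2 rho_pos sq0 r0 by (intro mult_right_mono) auto
        ultimately show ?thesis by (simp add: mult.assoc)
      qed
      also have "\<dots> \<le> 1/200 * \<epsilon> + 1/200 * (\<rho> * sq) * (1/2 * sq) + \<rho>/2 * (1/4 * sq^2) + \<rho> * (1/4 * sq^2)"
      proof -
        have "\<rho> * sq * r \<le> \<rho> * sq * (1/2 * sq)" using rs rho_pos sq0 by (intro mult_left_mono) auto
        moreover have "\<rho> * r^2 \<le> \<rho> * (1/4 * sq^2)" using r2 rho_pos by (intro mult_left_mono) auto
        ultimately show ?thesis by simp
      qed
      also have "\<dots> \<le> \<epsilon>" unfolding eps_sq using rho_pos
        by (simp add: power2_eq_square algebra_simps)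
      finally show ?thesis .
    qed
    have hbound: "- sqrt (\<rho> * \<epsilon>) \<le> lambda_min (H y)"
    proof -
      have "- (c2 * (\<rho> * sq) + 3/2 * \<rho> * r) \<le> lambda_min (H y)"
      proof (rule lambda_min_ge)
        show "u \<bullet> (H y *v w) = w \<bullet> (H y *v u)" for u w
          by (rule hess_sym[OF grad hess lip rho_pos])
      next
        fix v
        have split: "v \<bullet> (H y *v v) = v \<bullet> (B *v v) - v \<bullet> ((B - H x) *v v) + v \<bullet> ((H y - H x) *v v)"
          by (simp add: matrix_vector_mult_diff_rdistrib inner_diff_right)
        have a1: "v \<bullet> ((B - H x) *v v) \<le> c2 * (\<rho> * sq) * norm v ^ 2"
        proof -
          have "v \<bullet> ((B - H x) *v v) \<le> norm v * norm ((B - H x) *v v)" by (rule norm_cauchy_schwarz)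
          also have "\<dots> \<le> norm v * (c2 * (\<rho> * sq) * norm v)"
            using cc2[of v] srho by (intro mult_left_mono) auto
          finally show ?thesis by (simp add: power2_eq_square mult_ac)
        qed
        have a2: "- (\<rho> * r * norm v ^ 2) \<le> v \<bullet> ((H y - H x) *v v)"
        proof -
          have "norm ((H y - H x) *v v) \<le> onorm (\<lambda>v. (H y - H x) *v v) * norm v"
            by (rule onorm) simp
          also have "\<dots> \<le> \<rho> * r * norm v"
            using lip[of y x] by (intro mult_right_mono) (auto simp: y_def r_def)
          finally have "norm ((H y - H x) *v v) \<le> \<rho> * r * norm v" .
          moreover have "\<bar>v \<bullet> ((H y - H x) *v v)\<bar> \<le> norm v * norm ((H y - H x) *v v)" by (rule Cauchy_Schwarz_ineq2)
          ultimately have "\<bar>v \<bullet> ((H y - H x) *v v)\<bar> \<le> norm v * (\<rho> * r * norm v)"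
            by (meson mult_left_mono norm_ge_zero order_trans)
          thus ?thesis by (simp add: power2_eq_square mult_ac abs_le_iff)
        qed
        show "- (c2 * (\<rho> * sq) + 3/2 * \<rho> * r) * norm v ^ 2 \<le> v \<bullet> (H y *v v)"
          unfolding split using socD[of v] a1 a2 by (simp add: algebra_simps)
      qed
      moreover have "- sqrt (\<rho> * \<epsilon>) \<le> - (c2 * (\<rho> * sq) + 3/2 * \<rho> * r)"
      proof -
        have "c2 * (\<rho> * sq) \<le> 1/200 * (\<rho> * sq)" using c2 rho_pos sq0 by (intro mult_right_mono) auto
        moreover have "\<rho> * r \<le> \<rho> * (1/2 * sq)" using rs rho_pos by (intro mult_left_mono) auto
        moreover have "\<rho> * sq \<ge> 0" using rho_pos sq0 by simp
        moreover have "3/2 * \<rho> * r = 3/2 * (\<rho> * r)" by simp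
        ultimately show ?thesis unfolding srho by linarith
      qed
      ultimately show ?thesis by linarith
    qed
    have "is_eps_sosp grad H \<rho> \<epsilon> (x + Dstar)"
      using gbound hbound unfolding is_eps_sosp_def y_def by simp
    thus False using not_sosp by simp
  qed
  have "mt D \<le> mt Dstar + c3 / 12 * \<rho> * r ^ 3"
    using case2 big unfolding mt_def r_def sq_def by simp
  also have "\<dots> \<le> - (1 - c3) / 12 * \<rho> * r^3" using val by (simp add: algebra_simps)
  also have "\<dots> \<le> - (1 - c3) / 12 * \<rho> * (1/2 * sq)^3"
  proof -
    have "(1/2 * sq)^3 \<le> r^3" using big sq0 by (intro power_mono) auto
    moreover have "- (1 - c3) / 12 * \<rho> \<le> 0" using c3 rho_pos by (simp add: mult_nonpos_nonneg)
    ultimately show ?thesis by (rule mult_left_mono_neg)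
  qed
  also have "\<dots> = - (1 - c3) / 96 * sqrt (\<epsilon> ^ 3 / \<rho>)"
    unfolding seps by (simp add: eps_sq power3_eq_cube power2_eq_square)
  finally have "mt D \<le> - (1 - c3) / 96 * sqrt (\<epsilon> ^ 3 / \<rho>)" .
  moreover have "cubic_model f x g B \<rho> (x + D) - cubic_model f x g B \<rho> x = mt D"
    by (simp add: mt_def cubic_model_shift_def cubic_model_def)
  ultimately show ?thesis by simp
qed

end
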